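(* Let $U\subseteq\mathbb{R}^4$ be open with coordinates $(x^1,x^2,x^3,x^4)$ and let $a,b,p,q,s$ be real constants with $a^2+b^2\neq0$. Consider the Lorentzian metric $$g=2\,dx^1dx^4+(dx^2)^2+(dx^3)^2+\Big(x^4\big(a(x^2)^2+b(x^3)^2\big)+p(x^2)^2+2qx^2x^3+s(x^3)^2\Big)(dx^4)^2$$ on $U$. Then for every real constant $\lambda$ (positive, zero or negative) there exists a smooth vector field $V$ on $U$ such that $\mathcal{L}_Vg+\varrho=\lambda g$. In particular $(U,g)$ is a shrinking, a steady and an expanding Ricci soliton.
   Context: $\mathcal{L}_V$ denotes the Lie derivative and $\varrho$ the Ricci tensor, $\varrho(Y,Z)=\operatorname{tr}(X\mapsto R(X,Z)Y)$ with $R(X,Y)=[\nabla_X,\nabla_Y]-\nabla_{[X,Y]}$. A Ricci soliton $(M,g,V,\lambda)$, i.e. $\mathcal{L}_Vg+\varrho=\lambda g$ with $\lambda\in\mathbb{R}$, is called shrinking, steady or expanding according as $\lambda>0$, $\lambda=0$ or $\lambda<0$. *)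

theory Defs
  imports "HOL-Analysis.Analysis"
begin

text \<open>Coordinates on R^4 are indexed by the numeral type 4; the paper's
index 4 is the element 4 = 0 of that type, so x$1, x$2, x$3, x$4 are the
four distinct coordinates.\<close>

definition partial :: "4 \<Rightarrow> (real^4 \<Rightarrow> real) \<Rightarrow> real^4 \<Rightarrow> real" where
  "partial i f x = deriv (\<lambda>t. f (x + t *\<^sub>R axis i 1)) 0"

fun Ck :: "nat \<Rightarrow> (real^4) set \<Rightarrow> (real^4 \<Rightarrow> real) \<Rightarrow> bool" where
  "Ck 0 U f = continuous_on U f"
| "Ck (Suc k) U f = (continuous_on U f \<and>
      (\<forall>i. \<forall>x\<in>U. (\<lambda>t. f (x + t *\<^sub>R axis i 1)) differentiable (at 0)) \<and>
      (\<forall>i. Ck k U (partial i f)))"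

definition smooth_on :: "(real^4) set \<Rightarrow> (real^4 \<Rightarrow> real) \<Rightarrow> bool" where
  "smooth_on U f = (\<forall>k. Ck k U f)"

definition metric_inv :: "(real^4 \<Rightarrow> real^4^4) \<Rightarrow> real^4 \<Rightarrow> real^4^4" where
  "metric_inv g x = matrix_inv (g x)"

definition christoffel :: "(real^4 \<Rightarrow> real^4^4) \<Rightarrow> 4 \<Rightarrow> 4 \<Rightarrow> 4 \<Rightarrow> real^4 \<Rightarrow> real" where
  "christoffel g k i j x = (1/2) * (\<Sum>l\<in>UNIV. metric_inv g x $ k $ l *
      (partial i (\<lambda>y. g y $ j $ l) x + partial j (\<lambda>y. g y $ i $ l) x
       - partial l (\<lambda>y. g y $ i $ j) x))"

text \<open>riemann g l i j k x is the d_l-component of R(d_i,d_j)d_k, where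
R(X,Y) = [nabla_X, nabla_Y] - nabla_[X,Y].\<close>
definition riemann :: "(real^4 \<Rightarrow> real^4^4) \<Rightarrow> 4 \<Rightarrow> 4 \<Rightarrow> 4 \<Rightarrow> 4 \<Rightarrow> real^4 \<Rightarrow> real" where
  "riemann g l i j k x = partial i (christoffel g l j k) x - partial j (christoffel g l i k) x
     + (\<Sum>m\<in>UNIV. christoffel g m j k x * christoffel g l i m x
                - christoffel g m i k x * christoffel g l j m x)"

text \<open>rho(d_j,d_k) = tr(X |-> R(X,d_k)d_j).\<close>
definition ricci :: "(real^4 \<Rightarrow> real^4^4) \<Rightarrow> real^4 \<Rightarrow> real^4^4" where
  "ricci g x = (\<chi> j k. \<Sum>i\<in>UNIV. riemann g i i k j x)"

definition lie_deriv :: "(real^4 \<Rightarrow> real^4) \<Rightarrow> (real^4 \<Rightarrow> real^4^4) \<Rightarrow> real^4 \<Rightarrow> real^4^4" where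
  "lie_deriv V g x = (\<chi> i j. \<Sum>k\<in>UNIV.
      V x $ k * partial k (\<lambda>y. g y $ i $ j) x
      + g x $ k $ j * partial i (\<lambda>y. V y $ k) x
      + g x $ i $ k * partial j (\<lambda>y. V y $ k) x)"

definition soliton_metric :: "real \<Rightarrow> real \<Rightarrow> real \<Rightarrow> real \<Rightarrow> real \<Rightarrow> real^4 \<Rightarrow> real^4^4" where
  "soliton_metric a b p q s x = (\<chi> i j.
      if (i = 1 \<and> j = 4) \<or> (i = 4 \<and> j = 1) then 1
      else if i = j \<and> (i = 2 \<or> i = 3) then 1
      else if i = 4 \<and> j = 4 then
        x$4 * (a * (x$2)^2 + b * (x$3)^2) + p * (x$2)^2 + 2 * q * x$2 * x$3 + s * (x$3)^2
      else 0)"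

end

theory Submission
  imports Defs
begin

lemma partial_eq: "((\<lambda>t. f (x + t *\<^sub>R axis i 1)) has_real_derivative D) (at 0) \<Longrightarrow> partial i f x = D"
  unfolding partial_def by (rule DERIV_imp_deriv)

lemma partial_const: "partial i (\<lambda>y. c) x = 0"
  by (rule partial_eq) (rule DERIV_const)

lemma line_comp: "(x + t *\<^sub>R axis i 1) $ j = x $ j + t * axis i (1::real) $ j"
  by simp


inductive poly4 :: "(real^4 \<Rightarrow> real) \<Rightarrow> bool" where
  pc: "poly4 (\<lambda>x. c)"
| pv: "poly4 (\<lambda>x. x $ j)"
| padd: "poly4 f \<Longrightarrow> poly4 g \<Longrightarrow> poly4 (\<lambda>x. f x + g x)"
| pmul: "poly4 f \<Longrightarrow> poly4 g \<Longrightarrow> poly4 (\<lambda>x. f x * g x)"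

lemma pdiv: assumes "poly4 f" shows "poly4 (\<lambda>x. f x / c)"
proof -
  have "poly4 (\<lambda>x. f x * (1/c))" by (rule pmul[OF assms pc])
  then show ?thesis by simp
qed

lemma poly4_deriv: "poly4 f \<Longrightarrow> \<exists>f'. poly4 f' \<and> (\<forall>x. ((\<lambda>t. f (x + t *\<^sub>R axis i 1)) has_real_derivative f' x) (at 0))"
proof (induction rule: poly4.induct)
  case (pc c)
  show ?case by (rule exI[of _ "\<lambda>x. 0"]) (auto intro: poly4.intros)
next
  case (pv j)
  show ?case
    apply (rule exI[of _ "\<lambda>x. axis i 1 $ j"])
    apply (auto intro: poly4.intros simp only: line_comp)
    apply (rule derivative_eq_intros refl | simp)+
    done
next
  case (padd f g)
  then obtain f' g' where "poly4 f'" "poly4 g'"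
    "\<forall>x. ((\<lambda>t. f (x + t *\<^sub>R axis i 1)) has_real_derivative f' x) (at 0)"
    "\<forall>x. ((\<lambda>t. g (x + t *\<^sub>R axis i 1)) has_real_derivative g' x) (at 0)" by blast
  then show ?case
    by (intro exI[of _ "\<lambda>x. f' x + g' x"]) (auto intro: poly4.intros DERIV_add)
next
  case (pmul f g)
  then obtain f' g' where "poly4 f'" "poly4 g'"
    and df: "\<forall>x. ((\<lambda>t. f (x + t *\<^sub>R axis i 1)) has_real_derivative f' x) (at 0)"
    and dg: "\<forall>x. ((\<lambda>t. g (x + t *\<^sub>R axis i 1)) has_real_derivative g' x) (at 0)" by blast
  have "((\<lambda>t. f (x + t *\<^sub>R axis i 1) * g (x + t *\<^sub>R axis i 1)) has_real_derivative (f' x * g x + f x * g' x)) (at 0)" for x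
    using DERIV_mult[OF df[rule_format, of x] dg[rule_format, of x]] by (simp add: mult.commute)
  then show ?case using \<open>poly4 f'\<close> \<open>poly4 g'\<close> \<open>poly4 f\<close> \<open>poly4 g\<close>
    by (intro exI[of _ "\<lambda>x. f' x * g x + f x * g' x"]) (auto intro: poly4.intros)
qed

lemma poly4_partial: assumes "poly4 f" shows "poly4 (partial i f)"
proof -
  obtain f' where "poly4 f'" and d: "\<forall>x. ((\<lambda>t. f (x + t *\<^sub>R axis i 1)) has_real_derivative f' x) (at 0)"
    using poly4_deriv[OF assms] by blast
  have "partial i f = f'" using d by (auto simp: fun_eq_iff intro: partial_eq)
  then show ?thesis using \<open>poly4 f'\<close> by simp
qed

lemma poly4_differentiable: assumes "poly4 f" shows "(\<lambda>t. f (x + t *\<^sub>R axis i 1)) differentiable (at 0)"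
  using poly4_deriv[OF assms, of i] unfolding differentiable_def has_field_derivative_def by blast

lemma poly4_cont: "poly4 f \<Longrightarrow> continuous_on U f"
  by (induction rule: poly4.induct) (auto intro!: continuous_intros)

lemma poly4_Ck: "poly4 f \<Longrightarrow> Ck k U f"
  by (induction k arbitrary: f) (auto simp: poly4_cont poly4_differentiable poly4_partial)

lemma poly4_smooth: "poly4 f \<Longrightarrow> smooth_on U f"
  by (simp add: smooth_on_def poly4_Ck)

lemma cases4: fixes x :: 4 obtains "x = 1" | "x = 2" | "x = 3" | "x = 4"
  using exhaust_4 by blast

context fixes a b p q s :: real
begin

definition FF :: "real^4 \<Rightarrow> real" where
 "FF x = x$4 * (a * (x$2)^2 + b * (x$3)^2) + p * (x$2)^2 + 2 * q * x$2 * x$3 + s * (x$3)^2"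
definition Fh2 :: "real^4 \<Rightarrow> real" where "Fh2 x = x$4*a*x$2 + p*x$2 + q*x$3"
definition Fh3 :: "real^4 \<Rightarrow> real" where "Fh3 x = x$4*b*x$3 + q*x$2 + s*x$3"
definition Fh4 :: "real^4 \<Rightarrow> real" where "Fh4 x = (a*(x$2)^2 + b*(x$3)^2)/2"
definition NFh2 :: "real^4 \<Rightarrow> real" where "NFh2 x = - Fh2 x"
definition NFh3 :: "real^4 \<Rightarrow> real" where "NFh3 x = - Fh3 x"

lemma partial_FF: "partial i FF x = 2 * Fh2 x * axis i 1 $ 2 + 2 * Fh3 x * axis i 1 $ 3 + 2 * Fh4 x * axis i 1 $ 4"
  apply (rule partial_eq)
  unfolding FF_def line_comp
  apply (rule derivative_eq_intros refl | simp)+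
  apply (simp add: Fh2_def Fh3_def Fh4_def algebra_simps power2_eq_square)
  done


lemma partial_Fh2: "partial i Fh2 x = (a*x$4 + p) * axis i 1 $ 2 + q * axis i 1 $ 3 + a * x$2 * axis i 1 $ 4"
  apply (rule partial_eq) unfolding Fh2_def line_comp
  apply (rule derivative_eq_intros refl | simp)+ apply (simp add: algebra_simps)? done
lemma partial_Fh3: "partial i Fh3 x = q * axis i 1 $ 2 + (b*x$4 + s) * axis i 1 $ 3 + b * x$3 * axis i 1 $ 4"
  apply (rule partial_eq) unfolding Fh3_def line_comp
  apply (rule derivative_eq_intros refl | simp)+ apply (simp add: algebra_simps)? done
lemma partial_Fh4: "partial i Fh4 x = a * x$2 * axis i 1 $ 2 + b * x$3 * axis i 1 $ 3"
  apply (rule partial_eq) unfolding Fh4_def line_comp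
  apply (rule derivative_eq_intros refl | simp)+ apply (simp add: algebra_simps)? done
lemma partial_NFh2: "partial i NFh2 x = - ((a*x$4 + p) * axis i 1 $ 2 + q * axis i 1 $ 3 + a * x$2 * axis i 1 $ 4)"
  apply (rule partial_eq) unfolding NFh2_def Fh2_def line_comp
  apply (rule derivative_eq_intros refl | simp)+ apply (simp add: algebra_simps)? done
lemma partial_NFh3: "partial i NFh3 x = - (q * axis i 1 $ 2 + (b*x$4 + s) * axis i 1 $ 3 + b * x$3 * axis i 1 $ 4)"
  apply (rule partial_eq) unfolding NFh3_def Fh3_def line_comp
  apply (rule derivative_eq_intros refl | simp)+ apply (simp add: algebra_simps)? done

lemma g_eq: "soliton_metric a b p q s = (\<lambda>x. \<chi> i j.
      if (i = 1 \<and> j = 4) \<or> (i = 4 \<and> j = 1) then 1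
      else if i = j \<and> (i = 2 \<or> i = 3) then 1
      else if i = 4 \<and> j = 4 then FF x else 0)"
  by (simp add: soliton_metric_def FF_def fun_eq_iff)

lemma partial_g: "partial l (\<lambda>y. soliton_metric a b p q s y $ i $ j) x =
   (if i = 4 \<and> j = 4 then 2 * Fh2 x * axis l 1 $ 2 + 2 * Fh3 x * axis l 1 $ 3 + 2 * Fh4 x * axis l 1 $ 4 else 0)"
proof (cases "i = 4 \<and> j = 4")
  case True
  then have "(\<lambda>y. soliton_metric a b p q s y $ i $ j) = FF" by (auto simp: g_eq)
  then show ?thesis using True by (simp add: partial_FF)
next
  case False
  then have "(\<lambda>y. soliton_metric a b p q s y $ i $ j) = (\<lambda>y. soliton_metric a b p q s 0 $ i $ j)" by (auto simp: g_eq)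
  then have "partial l (\<lambda>y. soliton_metric a b p q s y $ i $ j) x = 0" by (simp only: partial_const)
  with False show ?thesis by (simp only: if_False)
qed

definition Gi :: "real^4 \<Rightarrow> real^4^4" where
 "Gi x = (\<chi> i j. if i = 1 \<and> j = 1 then - FF x else if (i = 1 \<and> j = 4) \<or> (i = 4 \<and> j = 1) then 1
      else if i = j \<and> (i = 2 \<or> i = 3) then 1 else 0)"

lemma inv_unique: fixes A :: "real^4^4"
  assumes "A ** B = mat 1" "B ** A = mat 1" shows "matrix_inv A = B"
proof -
  let ?P = "\<lambda>B'. A ** B' = mat 1 \<and> B' ** A = mat 1"
  have "?P (matrix_inv A)" unfolding matrix_inv_def by (rule someI[of ?P B]) (use assms in auto)
  then have "matrix_inv A = matrix_inv A ** (A ** B)" using assms by simp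
  also have "\<dots> = (matrix_inv A ** A) ** B" by (simp add: matrix_mul_assoc)
  also have "\<dots> = B" using \<open>?P (matrix_inv A)\<close> by simp
  finally show ?thesis .
qed

lemma metric_inv_eq: "metric_inv (soliton_metric a b p q s) x = Gi x"
  unfolding metric_inv_def
  apply (rule inv_unique)
  by (simp_all add: g_eq Gi_def vec_eq_iff matrix_matrix_mult_def mat_def sum_4 forall_4)


definition C :: "4 \<Rightarrow> 4 \<Rightarrow> 4 \<Rightarrow> real^4 \<Rightarrow> real" where
 "C k i j = (if k = 1 \<and> i = 4 \<and> j = 4 then Fh4
    else if k = 1 \<and> ((i = 2 \<and> j = 4) \<or> (i = 4 \<and> j = 2)) then Fh2
    else if k = 1 \<and> ((i = 3 \<and> j = 4) \<or> (i = 4 \<and> j = 3)) then Fh3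
    else if k = 2 \<and> i = 4 \<and> j = 4 then NFh2
    else if k = 3 \<and> i = 4 \<and> j = 4 then NFh3
    else (\<lambda>x. 0))"

lemma christoffel_pt: "christoffel (soliton_metric a b p q s) k i j x = C k i j x"
  unfolding christoffel_def metric_inv_eq partial_g sum_4
  by (cases k rule: cases4; cases i rule: cases4; cases j rule: cases4)
     (simp_all add: Gi_def C_def NFh2_def NFh3_def axis_def)

lemma christoffel_eq: "christoffel (soliton_metric a b p q s) = C"
  by (simp add: fun_eq_iff christoffel_pt)


lemma ricci_eq: "ricci (soliton_metric a b p q s) x = (\<chi> j k. if j = 4 \<and> k = 4 then -((a+b)*x$4 + p + s) else 0)"
  unfolding ricci_def riemann_def christoffel_eq vec_eq_iff
  apply (intro allI)
  subgoal for j k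
  by (cases j rule: cases4; cases k rule: cases4)
     (simp_all add: sum_4 C_def partial_const partial_Fh2 partial_Fh3 partial_Fh4 partial_NFh2 partial_NFh3 axis_def algebra_simps)
  done


definition V1 :: "real \<Rightarrow> real^4 \<Rightarrow> real" where "V1 lam x = lam * x$1 + (a+b)/4 * (x$4 * x$4) + (p+s)/2 * x$4"
definition V2 :: "real \<Rightarrow> real^4 \<Rightarrow> real" where "V2 lam x = lam/2 * x$2"
definition V3 :: "real \<Rightarrow> real^4 \<Rightarrow> real" where "V3 lam x = lam/2 * x$3"
definition Vf :: "real \<Rightarrow> real^4 \<Rightarrow> real^4" where
  "Vf lam x = (\<chi> k. if k = 1 then V1 lam x else if k = 2 then V2 lam x else if k = 3 then V3 lam x else 0)"

lemma partial_V1: "partial i (V1 lam) x = lam * axis i 1 $ 1 + ((a+b)/2 * x$4 + (p+s)/2) * axis i 1 $ 4"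
  apply (rule partial_eq) unfolding V1_def line_comp
  apply (rule derivative_eq_intros refl | simp)+ apply (simp add: algebra_simps)? done
lemma partial_V2: "partial i (V2 lam) x = lam/2 * axis i 1 $ 2"
  apply (rule partial_eq) unfolding V2_def line_comp
  apply (rule derivative_eq_intros refl | simp)+ apply (simp add: algebra_simps)? done
lemma partial_V3: "partial i (V3 lam) x = lam/2 * axis i 1 $ 3"
  apply (rule partial_eq) unfolding V3_def line_comp
  apply (rule derivative_eq_intros refl | simp)+ apply (simp add: algebra_simps)? done

lemma soliton_eq: "lie_deriv (Vf lam) (soliton_metric a b p q s) x + ricci (soliton_metric a b p q s) x
    = lam *\<^sub>R soliton_metric a b p q s x"
  unfolding lie_deriv_def partial_g ricci_eq vec_eq_iff
  apply (intro allI)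
  subgoal for j k
  apply (cases j rule: cases4; cases k rule: cases4)
  apply (simp_all add: sum_4 g_eq Vf_def partial_const partial_V1 partial_V2 partial_V3 axis_def)
  apply (simp_all add: FF_def Fh2_def Fh3_def Fh4_def V2_def V3_def algebra_simps power2_eq_square)?
  done
  done


lemma V_smooth: "smooth_on U (\<lambda>x. Vf lam x $ k)"
proof (rule poly4_smooth)
  show "poly4 (\<lambda>x. Vf lam x $ k)"
    by (cases k rule: cases4) (auto simp: Vf_def V1_def V2_def V3_def intro!: poly4.intros pdiv)
qed

end

theorem mainTheorem5:
  fixes U :: "(real^4) set" and a b p q s :: real
  assumes "open U" and "a^2 + b^2 \<noteq> 0"
  shows "\<forall>lam::real. \<exists>V :: real^4 \<Rightarrow> real^4.
           (\<forall>k. smooth_on U (\<lambda>x. V x $ k)) \<and>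
           (\<forall>x\<in>U. lie_deriv V (soliton_metric a b p q s) x
                    + ricci (soliton_metric a b p q s) x
                  = lam *\<^sub>R soliton_metric a b p q s x)"
proof
  fix lam :: real
  show "\<exists>V :: real^4 \<Rightarrow> real^4.
           (\<forall>k. smooth_on U (\<lambda>x. V x $ k)) \<and>
           (\<forall>x\<in>U. lie_deriv V (soliton_metric a b p q s) x
                    + ricci (soliton_metric a b p q s) x
                  = lam *\<^sub>R soliton_metric a b p q s x)"
    by (rule exI[of _ "Vf a b p s lam"]) (simp add: V_smooth soliton_eq)
qed

end
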